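(* Let $\Phi$ be an $e$-dimensional formal group law over $k$, $m\in\mathbb N_{>0}\cup\{\infty\}$, and let $K\subseteq L$ be an extension of $\Phi[m]$-fields. If $K$ is strict, i.e. $C_K=K^p$, then the field extension $K\subseteq L$ is separable.
   Context: $k$ is a field of characteristic $p>0$. For a $k$-algebra $R$, $R[\bar v]:=R[X_1,\dots,X_e]/(X_1^{p^m},\dots,X_e^{p^m})$ ($R[[\bar X]]$ if $m=\infty$); $\bar w$ is a second $e$-tuple of $m$-truncated variables. $\Phi[m]\in(k[\bar v,\bar w])^e$ is the image of $\Phi(\bar X,\bar Y)$ under $X_i\mapsto v_i,Y_i\mapsto w_i$. An $m$-truncated $e$-dimensional HS-derivation on $R$ over $k$ is a family $(D_{\mathbf i}:R\to R)_{\mathbf i\in\{0,\dots,p^m-1\}^e}$ with $r\mapsto\sum D_{\mathbf i}(r)\bar v^{\mathbf i}$ a $k$-algebra homomorphism $R\to R[\bar v]$ and $D_{\mathbf 0}=\mathrm{id}$; it is an $F$-derivation if $\sum_{\mathbf i,\mathbf j}D_{\mathbf j}(D_{\mathbf i}(r))\bar v^{\mathbf i}\bar w^{\mathbf j}=\sum_{\mathbf i}D_{\mathbf i}(r)F(\bar v,\bar w)^{\mathbf i}$ for all $r$. An $F$-field is a field containing $k$ with an $F$-derivation; an extension of $F$-fields $K\subseteq L$ means $D^L_{\mathbf i}|_K=D^K_{\mathbf i}$ for all $\mathbf i$. $C_K:=\bigcap_{l=1}^e\ker D_{\varepsilon_l}$ ($\varepsilon_l$ the $l$-th unit vector). *)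

theory Defs
  imports Main "HOL-Library.Extended_Nat" "HOL-Library.Groups_Big_Fun"
begin

definition is_subfield :: "'a::field set \<Rightarrow> bool" where
  "is_subfield S \<longleftrightarrow> 0 \<in> S \<and> 1 \<in> S \<and>
     (\<forall>x\<in>S. \<forall>y\<in>S. x + y \<in> S \<and> x - y \<in> S \<and> x * y \<in> S) \<and>
     (\<forall>x\<in>S. x \<noteq> 0 \<longrightarrow> inverse x \<in> S)"

text \<open>A formal power series in the variables indexed by natural numbers is given by
  its coefficient function on exponent vectors (nat => nat); only finitely supported
  exponent vectors are meaningful.  A series "in n variables" vanishes on exponent
  vectors involving a variable with index >= n.\<close>

type_synonym 'a mps = "(nat \<Rightarrow> nat) \<Rightarrow> 'a"

definition mons :: "nat \<Rightarrow> (nat \<Rightarrow> nat) set" where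
  "mons n = {\<alpha>. \<forall>i\<ge>n. \<alpha> i = 0}"

definition mps_zero :: "'a::comm_ring_1 mps" where
  "mps_zero = (\<lambda>_. 0)"

definition mps_one :: "'a::comm_ring_1 mps" where
  "mps_one = (\<lambda>\<alpha>. if \<alpha> = (\<lambda>_. 0) then 1 else 0)"

definition mps_var :: "nat \<Rightarrow> 'a::comm_ring_1 mps" where
  "mps_var j = (\<lambda>\<alpha>. if \<alpha> = (\<lambda>i. if i = j then 1 else 0) then 1 else 0)"

definition mps_mult :: "'a::comm_ring_1 mps \<Rightarrow> 'a mps \<Rightarrow> 'a mps" where
  "mps_mult f g = (\<lambda>\<alpha>. \<Sum>\<beta>\<in>{\<beta>. \<beta> \<le> \<alpha>}. f \<beta> * g (\<lambda>i. \<alpha> i - \<beta> i))"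

primrec mps_pow :: "'a::comm_ring_1 mps \<Rightarrow> nat \<Rightarrow> 'a mps" where
  "mps_pow f 0 = mps_one"
| "mps_pow f (Suc n) = mps_mult (mps_pow f n) f"

primrec mps_monom_subst :: "nat \<Rightarrow> (nat \<Rightarrow> 'a::comm_ring_1 mps) \<Rightarrow> (nat \<Rightarrow> nat) \<Rightarrow> 'a mps" where
  "mps_monom_subst 0 g \<nu> = mps_one"
| "mps_monom_subst (Suc n) g \<nu> = mps_mult (mps_monom_subst n g \<nu>) (mps_pow (g n) (\<nu> n))"

text \<open>Substitution f(g_0,...,g_{n-1}) of series g_i (without constant term) into a
  series f in n variables; the sum is finitely supported in that situation.\<close>
definition mps_subst :: "nat \<Rightarrow> 'a::comm_ring_1 mps \<Rightarrow> (nat \<Rightarrow> 'a mps) \<Rightarrow> 'a mps" where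
  "mps_subst n f g = (\<lambda>\<alpha>. Sum_any (\<lambda>\<nu>. if \<nu> \<in> mons n then f \<nu> * mps_monom_subst n g \<nu> \<alpha> else 0))"

text \<open>An e-dimensional formal group law over k: components Phi 0, ..., Phi (e-1), each a
  power series with coefficients in k in the 2e variables X_i = var i, Y_i = var (e+i)
  (i < e), with Phi(X,0) = X, Phi(0,Y) = Y and Phi(Phi(X,Y),Z) = Phi(X,Phi(Y,Z))
  (where Z_i = var (2e+i)).\<close>

definition formal_group_law :: "'a::field set \<Rightarrow> nat \<Rightarrow> (nat \<Rightarrow> 'a mps) \<Rightarrow> bool" where
  "formal_group_law k e \<Phi> \<longleftrightarrow>
     (\<forall>l<e. \<forall>\<alpha>. \<Phi> l \<alpha> \<in> k) \<and>
     (\<forall>l<e. \<forall>\<alpha>. \<alpha> \<notin> mons (2*e) \<longrightarrow> \<Phi> l \<alpha> = 0) \<and>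
     (\<forall>l<e. mps_subst (2*e) (\<Phi> l) (\<lambda>i. if i < e then mps_var i else mps_zero) = mps_var l) \<and>
     (\<forall>l<e. mps_subst (2*e) (\<Phi> l) (\<lambda>i. if i < e then mps_zero else mps_var i) = mps_var (e + l)) \<and>
     (\<forall>l<e. mps_subst (2*e) (\<Phi> l) (\<lambda>i. if i < e then \<Phi> i else mps_var (e + i)) =
            mps_subst (2*e) (\<Phi> l) (\<lambda>i. if i < e then mps_var i
                                         else mps_subst (2*e) (\<Phi> (i - e)) (\<lambda>t. mps_var (e + t))))"

text \<open>Multi-indices i in {0,...,p^m - 1}^e (in N^e if m = infinity), represented as
  functions nat => nat vanishing outside {..<e}.\<close>
definition trunc_idx :: "nat \<Rightarrow> nat \<Rightarrow> enat \<Rightarrow> (nat \<Rightarrow> nat) set" where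
  "trunc_idx e p m = {i. (\<forall>l\<ge>e. i l = 0) \<and>
      (\<forall>l<e. (case m of \<infinity> \<Rightarrow> True | enat n \<Rightarrow> i l < p ^ n))}"

text \<open>r |-> sum D_i(r) v^i is a k-algebra homomorphism R -> R[v] and D_0 = id.
  Unfolded coefficientwise (the product in R[v] of the truncated ring).\<close>
definition HS_derivation ::
  "'a::field set \<Rightarrow> 'a set \<Rightarrow> nat \<Rightarrow> nat \<Rightarrow> enat \<Rightarrow> ((nat \<Rightarrow> nat) \<Rightarrow> 'a \<Rightarrow> 'a) \<Rightarrow> bool" where
  "HS_derivation k R e p m D \<longleftrightarrow>
     (\<forall>i\<in>trunc_idx e p m. \<forall>r\<in>R. D i r \<in> R) \<and>
     (\<forall>r\<in>R. D (\<lambda>_. 0) r = r) \<and>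
     (\<forall>i\<in>trunc_idx e p m. D i 1 = (if i = (\<lambda>_. 0) then 1 else 0)) \<and>
     (\<forall>i\<in>trunc_idx e p m. \<forall>r\<in>R. \<forall>s\<in>R. D i (r + s) = D i r + D i s) \<and>
     (\<forall>i\<in>trunc_idx e p m. \<forall>c\<in>k. \<forall>r\<in>R. D i (c * r) = c * D i r) \<and>
     (\<forall>i\<in>trunc_idx e p m. \<forall>r\<in>R. \<forall>s\<in>R.
        D i (r * s) = (\<Sum>j\<in>{j. j \<le> i}. D j r * D (\<lambda>l. i l - j l) s))"

text \<open>Coefficient of v^a w^b in F(v,w)^i = prod_l F_l(v,w)^(i_l), for a, b in the
  truncation range; it coincides with the coefficient of X^a Y^b in the power series
  Phi(X,Y)^i.\<close>
definition fgl_pow_coeff :: "nat \<Rightarrow> (nat \<Rightarrow> 'a::field mps) \<Rightarrow> (nat \<Rightarrow> nat) \<Rightarrow> (nat \<Rightarrow> nat) \<Rightarrow> (nat \<Rightarrow> nat) \<Rightarrow> 'a" where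
  "fgl_pow_coeff e \<Phi> i a b = mps_monom_subst e \<Phi> i (\<lambda>t. if t < e then a t else b (t - e))"

text \<open>Phi[m]-derivation: sum_{i,j} D_j(D_i r) v^i w^j = sum_i D_i(r) Phi[m](v,w)^i,
  compared coefficientwise at v^a w^b.\<close>
definition F_derivation ::
  "'a::field set \<Rightarrow> 'a set \<Rightarrow> nat \<Rightarrow> nat \<Rightarrow> enat \<Rightarrow> (nat \<Rightarrow> 'a mps) \<Rightarrow> ((nat \<Rightarrow> nat) \<Rightarrow> 'a \<Rightarrow> 'a) \<Rightarrow> bool" where
  "F_derivation k R e p m \<Phi> D \<longleftrightarrow> HS_derivation k R e p m D \<and>
     (\<forall>r\<in>R. \<forall>a\<in>trunc_idx e p m. \<forall>b\<in>trunc_idx e p m.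
        D b (D a r) = Sum_any (\<lambda>i. if i \<in> trunc_idx e p m then D i r * fgl_pow_coeff e \<Phi> i a b else 0))"

definition unit_idx :: "nat \<Rightarrow> nat \<Rightarrow> nat" where
  "unit_idx l = (\<lambda>t. if t = l then 1 else 0)"

definition const_field :: "'a::field set \<Rightarrow> nat \<Rightarrow> ((nat \<Rightarrow> nat) \<Rightarrow> 'a \<Rightarrow> 'a) \<Rightarrow> 'a set" where
  "const_field K e D = {x\<in>K. \<forall>l<e. D (unit_idx l) x = 0}"

definition pth_powers :: "nat \<Rightarrow> 'a::field set \<Rightarrow> 'a set" where
  "pth_powers p K = {x ^ p | x. x \<in> K}"

definition lin_indep_over :: "'a::field set \<Rightarrow> nat \<Rightarrow> (nat \<Rightarrow> 'a) \<Rightarrow> bool" where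
  "lin_indep_over K n x \<longleftrightarrow>
     (\<forall>c. (\<forall>i<n. c i \<in> K) \<and> (\<Sum>i<n. c i * x i) = 0 \<longrightarrow> (\<forall>i<n. c i = 0))"

text \<open>The extension K \<subseteq> L (L the ambient field) is separable, i.e. L and K^(1/p)
  are linearly disjoint over K; transported by Frobenius: any K-linearly independent
  x_1..x_n in L have K-linearly independent p-th powers.\<close>
definition separable_ext :: "nat \<Rightarrow> 'a::field set \<Rightarrow> 'a set \<Rightarrow> bool" where
  "separable_ext p K L \<longleftrightarrow>
     (\<forall>n x. (\<forall>i<n. x i \<in> L) \<and> lin_indep_over K n x \<longrightarrow> lin_indep_over K n (\<lambda>i. x i ^ p))"

end

theory Submission
  imports Defs "HOL-Computational_Algebra.Primes"
begin

lemma HS_add: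
  assumes "HS_derivation k R e p m D" "i \<in> trunc_idx e p m" "r \<in> R" "s \<in> R"
  shows "D i (r + s) = D i r + D i s"
  using assms unfolding HS_derivation_def by blast

lemma HS_id:
  assumes "HS_derivation k R e p m D" "r \<in> R"
  shows "D (\<lambda>_. 0) r = r"
  using assms unfolding HS_derivation_def by blast

lemma HS_closed:
  assumes "HS_derivation k R e p m D" "i \<in> trunc_idx e p m" "r \<in> R"
  shows "D i r \<in> R"
  using assms unfolding HS_derivation_def by blast

lemma HS_mult:
  assumes "HS_derivation k R e p m D" "i \<in> trunc_idx e p m" "r \<in> R" "s \<in> R"
  shows "D i (r * s) = (\<Sum>j\<in>{j. j \<le> i}. D j r * D (\<lambda>l. i l - j l) s)"
  using assms unfolding HS_derivation_def by blast

lemma HS_one: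
  assumes "HS_derivation k R e p m D" "i \<in> trunc_idx e p m"
  shows "D i 1 = (if i = (\<lambda>_. 0) then 1 else 0)"
  using assms unfolding HS_derivation_def by blast

lemma unit_in_trunc:
  assumes "l < e" "p \<ge> 2" "m > 0"
  shows "unit_idx l \<in> trunc_idx e p m"
proof -
  have le1: "unit_idx l t \<le> 1" for t by (simp add: unit_idx_def)
  have A: "\<forall>t\<ge>e. unit_idx l t = 0" using assms(1) by (simp add: unit_idx_def)
  have B: "(case m of \<infinity> \<Rightarrow> True | enat n \<Rightarrow> unit_idx l t < p ^ n)" for t
  proof (cases m)
    case (enat n)
    have "n > 0" using assms(3) enat by (simp add: enat_0_iff)
    moreover have "1 < p" using assms(2) by simp
    ultimately have "1 < p ^ n" by (intro one_less_power)
    thus ?thesis using enat le1[of t] by simp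
  next
    case infinity thus ?thesis by simp
  qed
  show ?thesis unfolding trunc_idx_def using A B by blast
qed

lemma le_unit_set: "{j::nat\<Rightarrow>nat. j \<le> unit_idx l} = {(\<lambda>_. 0), unit_idx l}"
proof (intro set_eqI iffI)
  fix j :: "nat \<Rightarrow> nat" assume "j \<in> {j. j \<le> unit_idx l}"
  hence le: "\<And>t. j t \<le> unit_idx l t" by (simp add: le_fun_def)
  have z: "j t = 0" if "t \<noteq> l" for t
    using le[of t] that by (simp add: unit_idx_def)
  show "j \<in> {(\<lambda>_. 0), unit_idx l}"
  proof (cases "j l = 0")
    case True
    have "j = (\<lambda>_. 0)"
    proof (rule ext)
      fix t show "j t = 0" using True z by (cases "t = l") auto
    qed
    thus ?thesis by simp
  next
    case False
    hence jl: "j l = 1" using le[of l] by (simp add: unit_idx_def)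
    have "j = unit_idx l"
    proof (rule ext)
      fix t show "j t = unit_idx l t" using jl z by (cases "t = l") (auto simp: unit_idx_def)
    qed
    thus ?thesis by simp
  qed
next
  fix j :: "nat \<Rightarrow> nat" assume "j \<in> {(\<lambda>_. 0), unit_idx l}"
  thus "j \<in> {j. j \<le> unit_idx l}" by (auto simp: le_fun_def)
qed

lemma unit_ne0: "unit_idx l \<noteq> (\<lambda>_. 0)"
proof
  assume "unit_idx l = (\<lambda>_. 0)"
  hence "unit_idx l l = 0" by simp
  thus False by (simp add: unit_idx_def)
qed

lemma deriv_mult:
  assumes "HS_derivation k UNIV e p m D" "unit_idx l \<in> trunc_idx e p m"
  shows "D (unit_idx l) (r * s) = r * D (unit_idx l) s + D (unit_idx l) r * s"
proof -
  have "D (unit_idx l) (r * s) = (\<Sum>j\<in>{j. j \<le> unit_idx l}. D j r * D (\<lambda>t. unit_idx l t - j t) s)"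
    using HS_mult[OF assms] by blast
  also have "\<dots> = (\<Sum>j\<in>{(\<lambda>_. 0), unit_idx l}. D j r * D (\<lambda>t. unit_idx l t - j t) s)"
    unfolding le_unit_set ..
  also have "\<dots> = D (\<lambda>_. 0) r * D (\<lambda>t. unit_idx l t - 0) s + D (unit_idx l) r * D (\<lambda>t. unit_idx l t - unit_idx l t) s"
    using unit_ne0[of l] by (subst sum.insert) auto
  also have "\<dots> = D (\<lambda>_. 0) r * D (unit_idx l) s + D (unit_idx l) r * D (\<lambda>_. 0) s"
    by simp
  also have "\<dots> = r * D (unit_idx l) s + D (unit_idx l) r * s"
    using HS_id[OF assms(1)] by simp
  finally show ?thesis .
qed

lemma deriv_one:
  assumes "HS_derivation k R e p m D" "unit_idx l \<in> trunc_idx e p m"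
  shows "D (unit_idx l) 1 = 0"
  using HS_one[OF assms] unit_ne0[of l] by simp

lemma deriv_pow:
  assumes "HS_derivation k UNIV e p m D" "unit_idx l \<in> trunc_idx e p m"
  shows "D (unit_idx l) (x ^ Suc n) = of_nat (Suc n) * x ^ n * D (unit_idx l) x"
proof (induction n)
  case 0 thus ?case using deriv_mult[OF assms, of x 1] deriv_one[OF assms] by simp
next
  case (Suc n)
  have "D (unit_idx l) (x ^ Suc (Suc n)) = D (unit_idx l) (x * x ^ Suc n)" by simp
  also have "\<dots> = x * D (unit_idx l) (x ^ Suc n) + D (unit_idx l) x * x ^ Suc n"
    by (rule deriv_mult[OF assms])
  also have "\<dots> = of_nat (Suc (Suc n)) * x ^ Suc n * D (unit_idx l) x"
    unfolding Suc by (simp add: algebra_simps)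
  finally show ?case .
qed

lemma deriv_sum:
  assumes "HS_derivation k UNIV e p m D" "unit_idx l \<in> trunc_idx e p m" "finite S"
  shows "D (unit_idx l) (sum f S) = (\<Sum>i\<in>S. D (unit_idx l) (f i))"
  using assms(3)
proof (induction S rule: finite_induct)
  case empty
  have "D (unit_idx l) (0 + 0) = D (unit_idx l) 0 + D (unit_idx l) 0"
    using HS_add[OF assms(1,2)] by blast
  hence "D (unit_idx l) 0 + 0 = D (unit_idx l) 0 + D (unit_idx l) 0" by simp
  hence "0 = D (unit_idx l) 0" by (simp only: add_left_cancel)
  thus ?case by simp
next
  case (insert a F)
  have "D (unit_idx l) (sum f (insert a F)) = D (unit_idx l) (f a + sum f F)"
    using insert.hyps by simp
  also have "\<dots> = D (unit_idx l) (f a) + D (unit_idx l) (sum f F)"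
    using HS_add[OF assms(1,2)] by blast
  finally show ?case using insert by simp
qed

theorem mainTheorem7:
  fixes k K :: "'a::field set"
    and p e :: nat and m :: enat
    and \<Phi> :: "nat \<Rightarrow> 'a mps"
    and DK DL :: "(nat \<Rightarrow> nat) \<Rightarrow> 'a \<Rightarrow> 'a"
  assumes char: "p > 0" "CHAR('a) = p"
    and k: "is_subfield k"
    and K: "is_subfield K" "k \<subseteq> K"
    and fgl: "formal_group_law k e \<Phi>"
    and m: "m > 0"
    and DK: "F_derivation k K e p m \<Phi> DK"
    and DL: "F_derivation k UNIV e p m \<Phi> DL"
    and ext: "\<forall>i\<in>trunc_idx e p m. \<forall>x\<in>K. DL i x = DK i x"
    and strict: "const_field K e DK = pth_powers p K"
  shows "separable_ext p K UNIV"
proof -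
  have pr: "prime CHAR('a)" using char by (intro prime_CHAR_semidom) simp
  hence p2: "p \<ge> 2" using char prime_ge_2_nat by blast
  have HL: "HS_derivation k UNIV e p m DL" and HK: "HS_derivation k K e p m DK"
    using DL DK unfolding F_derivation_def by auto
  have U: "\<And>l. l < e \<Longrightarrow> unit_idx l \<in> trunc_idx e p m"
    using unit_in_trunc p2 m by blast
  have Kclosed: "\<And>x y. x \<in> K \<Longrightarrow> y \<in> K \<Longrightarrow> x * y \<in> K"
    "\<And>x. x \<in> K \<Longrightarrow> inverse x \<in> K" "0 \<in> K"
    using K(1) unfolding is_subfield_def by auto
  have dpow: "DL (unit_idx l) (x ^ p) = 0" if "l < e" for l x
  proof -
    have "p = Suc (p - 1)" using char by simp
    hence "DL (unit_idx l) (x ^ p) = of_nat p * x ^ (p - 1) * DL (unit_idx l) x"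
      using deriv_pow[OF HL U[OF that], of x "p - 1"] by simp
    thus ?thesis using char of_nat_CHAR[where 'a='a] by simp
  qed
  show ?thesis unfolding separable_ext_def
  proof (intro allI impI)
    fix n and x :: "nat \<Rightarrow> 'a"
    assume "(\<forall>i<n. x i \<in> UNIV) \<and> lin_indep_over K n x"
    hence li: "lin_indep_over K n x" by simp
    have claim: "\<forall>c. (\<forall>i\<in>S. c i \<in> K) \<and> (\<Sum>i\<in>S. c i * x i ^ p) = 0 \<longrightarrow> (\<forall>i\<in>S. c i = 0)"
      if "S \<subseteq> {..<n}" for S
      using that
    proof (induction "card S" arbitrary: S rule: less_induct)
      case less
      have finS: "finite S" using less.prems finite_subset by blast
      show ?case
      proof (intro allI impI ballI, rule ccontr)
        fix c j assume cS: "(\<forall>i\<in>S. c i \<in> K) \<and> (\<Sum>i\<in>S. c i * x i ^ p) = 0"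
          and jS: "j \<in> S" and cj: "c j \<noteq> 0"
        define c' where "c' i = c i * inverse (c j)" for i
        have c'K: "\<forall>i\<in>S. c' i \<in> K" using cS jS Kclosed unfolding c'_def by auto
        have c'j: "c' j = 1" using cj unfolding c'_def by simp
        have rel: "(\<Sum>i\<in>S. c' i * x i ^ p) = 0"
        proof -
          have "(\<Sum>i\<in>S. c' i * x i ^ p) = (\<Sum>i\<in>S. c i * x i ^ p) * inverse (c j)"
            unfolding c'_def sum_distrib_right by (simp add: algebra_simps)
          thus ?thesis using cS by simp
        qed
        have const: "\<forall>i\<in>S. DK (unit_idx l) (c' i) = 0" if l: "l < e" for l
        proof -
          have "0 = DL (unit_idx l) (\<Sum>i\<in>S. c' i * x i ^ p)"
            using rel deriv_sum[OF HL U[OF l] finite.emptyI, of "\<lambda>i. 0"] by simp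
          also have "\<dots> = (\<Sum>i\<in>S. DL (unit_idx l) (c' i * x i ^ p))"
            by (rule deriv_sum[OF HL U[OF l] finS])
          also have "\<dots> = (\<Sum>i\<in>S. DK (unit_idx l) (c' i) * x i ^ p)"
          proof (rule sum.cong[OF refl])
            fix i assume "i \<in> S"
            thus "DL (unit_idx l) (c' i * x i ^ p) = DK (unit_idx l) (c' i) * x i ^ p"
              using deriv_mult[OF HL U[OF l], of "c' i" "x i ^ p"] dpow[OF l] ext U[OF l] c'K
              by simp
          qed
          also have "\<dots> = (\<Sum>i\<in>S - {j}. DK (unit_idx l) (c' i) * x i ^ p)"
            using sum.remove[OF finS jS, of "\<lambda>i. DK (unit_idx l) (c' i) * x i ^ p"]
              c'j deriv_one[OF HK U[OF l]] by simp
          finally have r2: "(\<Sum>i\<in>S - {j}. DK (unit_idx l) (c' i) * x i ^ p) = 0" by simp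
          have cl: "card (S - {j}) < card S" using finS jS by (meson card_Diff1_less)
          have sub: "S - {j} \<subseteq> {..<n}" using less.prems by blast
          have Kin: "\<forall>i\<in>S - {j}. DK (unit_idx l) (c' i) \<in> K"
            using HK U[OF l] c'K unfolding HS_derivation_def by blast
          have IH: "\<forall>c. (\<forall>i\<in>S - {j}. c i \<in> K) \<and> (\<Sum>i\<in>S - {j}. c i * x i ^ p) = 0 \<longrightarrow> (\<forall>i\<in>S - {j}. c i = 0)"
            by (rule less.hyps[OF cl sub])
          have "\<forall>i\<in>S - {j}. DK (unit_idx l) (c' i) = 0"
            using mp[OF spec[OF IH, of "\<lambda>i. DK (unit_idx l) (c' i)"]] r2 Kin by simp
          thus ?thesis using c'j deriv_one[OF HK U[OF l]] by auto
        qed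
        have "\<forall>i\<in>S. \<exists>d. d \<in> K \<and> c' i = d ^ p"
        proof
          fix i assume iS: "i \<in> S"
          have "c' i \<in> const_field K e DK"
            unfolding const_field_def using c'K const iS by simp
          hence "c' i \<in> pth_powers p K" using strict by simp
          thus "\<exists>d. d \<in> K \<and> c' i = d ^ p" unfolding pth_powers_def by blast
        qed
        from bchoice[OF this] obtain d where d0: "\<forall>i\<in>S. d i \<in> K \<and> c' i = d i ^ p" ..
        hence d: "\<And>i. i \<in> S \<Longrightarrow> d i \<in> K \<and> c' i = d i ^ p" by blast
        define d' where "d' i = (if i \<in> S then d i else 0)" for i
        have "(\<Sum>i\<in>S. d i * x i) ^ p = (\<Sum>i\<in>S. (d i * x i) ^ p)"
          using freshmans_dream_sum[OF pr] char by simp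
        also have "\<dots> = (\<Sum>i\<in>S. c' i * x i ^ p)"
          using d by (simp add: power_mult_distrib)
        finally have "(\<Sum>i\<in>S. d i * x i) ^ p = 0" using rel by simp
        hence s0: "(\<Sum>i\<in>S. d i * x i) = 0" by simp
        have "(\<Sum>i<n. d' i * x i) = (\<Sum>i\<in>S. d' i * x i)"
          by (rule sum.mono_neutral_right) (use less.prems in \<open>auto simp: d'_def\<close>)
        also have "\<dots> = (\<Sum>i\<in>S. d i * x i)" unfolding d'_def by simp
        finally have "(\<Sum>i<n. d' i * x i) = 0" using s0 by simp
        moreover have "\<forall>i<n. d' i \<in> K" using d Kclosed unfolding d'_def by auto
        ultimately have "\<forall>i<n. d' i = 0"
          using mp[OF spec[OF li[unfolded lin_indep_over_def]], of d'] by blast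
        hence "d j = 0" using jS less.prems unfolding d'_def by auto
        hence "c' j = 0" using d[OF jS] char by simp
        thus False using c'j by simp
      qed
    qed
    show "lin_indep_over K n (\<lambda>i. x i ^ p)"
      unfolding lin_indep_over_def
    proof (rule allI, rule impI)
      fix c assume "(\<forall>i<n. c i \<in> K) \<and> (\<Sum>i<n. c i * x i ^ p) = 0"
      thus "\<forall>i<n. c i = 0" using mp[OF spec[OF claim[of "{..<n}"]], of c] by simp
    qed
  qed
qed

end
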